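(* Let $X$ be a real Hilbert space and let $T_1,T_2,T_3\colon X\to X$ be $\sigma_1$-, $\sigma_2$-, and $\sigma_3$-cocoercive, respectively. Let $\eta,\nu,\lambda,\delta>0$, set $S:=-\nu\mathrm{Id}+\lambda T_1-\delta T_3T_1$ and $T:=\mathrm{Id}-\eta T_1+\eta T_2S$. Suppose $\operatorname{Fix}T\neq\varnothing$ and that either (a) $\lambda=2\nu\sigma_1=2\sigma_2$ and $\eta<\eta^*:=\frac{1}{\nu}\big(\lambda-\frac{\delta}{2\sigma_3}\big)$; or (b) $\lambda<\nu\sigma_1+\sigma_2$ and $\eta<\eta^*:=\frac1\nu\Big(\frac{(2\nu\sigma_1-\lambda)(2\sigma_2-\lambda)}{2(\nu\sigma_1+\sigma_2-\lambda)}+\lambda-\frac{\delta}{2\sigma_3}\Big)$. Let $x_0\in X$ and $x_{n+1}:=Tx_n$ for all $n\in\mathbb N$. Then: (i) $T$ is $\frac{\eta}{\eta^*}$-averaged; $(x_n)$ converges weakly to some $x^*\in\operatorname{Fix}T$, and $\|x_n-Tx_n\|=o(1/\sqrt n)$ as $n\to\infty$. (ii) $(T_3T_1x_n)$ converges strongly to $T_3T_1x^*$, and $T_3T_1(\operatorname{Fix}T)=\{T_3T_1x^*\}$. (iii) If (a) holds and $\nu=\lambda-1$, then $(T_1x_n)$ and $(T_2Sx_n)$ converge weakly to $T_1x^*=T_2Sx^*$. (iv) If (b) holds, then $(T_1x_n)$ and $(T_2Sx_n)$ converge strongly to $T_1x^*=T_2Sx^*$, and $T_1(\operatorname{Fi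x}T)=T_2S(\operatorname{Fix}T)=\{T_1x^*\}$.
   Context: An operator $T\colon X\to X$ is $\sigma$-cocoercive ($\sigma>0$) if $\langle x-y,Tx-Ty\rangle\ge\sigma\|Tx-Ty\|^2$ for all $x,y$. $T$ is $\theta$-averaged for $\theta\in(0,1)$ if $T=(1-\theta)\mathrm{Id}+\theta N$ with $N$ nonexpansive. $\operatorname{Fix}T=\{x:Tx=x\}$. *)

theory Defs
  imports "HOL-Analysis.Analysis" "HOL-Library.Landau_Symbols"
begin

text \<open>Operators on a real Hilbert space: the type class combination
  real_inner + complete_space.\<close>

definition cocoercive :: "real \<Rightarrow> ('a::real_inner \<Rightarrow> 'a) \<Rightarrow> bool" where
  "cocoercive \<sigma> T \<longleftrightarrow> \<sigma> > 0 \<and>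
     (\<forall>x y. inner (x - y) (T x - T y) \<ge> \<sigma> * (norm (T x - T y))\<^sup>2)"

definition nonexpansive :: "('a::real_normed_vector \<Rightarrow> 'a) \<Rightarrow> bool" where
  "nonexpansive N \<longleftrightarrow> (\<forall>x y. norm (N x - N y) \<le> norm (x - y))"

definition averaged :: "real \<Rightarrow> ('a::real_normed_vector \<Rightarrow> 'a) \<Rightarrow> bool" where
  "averaged \<theta> T \<longleftrightarrow> 0 < \<theta> \<and> \<theta> < 1 \<and>
     (\<exists>N. nonexpansive N \<and> (\<forall>x. T x = (1 - \<theta>) *\<^sub>R x + \<theta> *\<^sub>R N x))"

definition Fix :: "('a \<Rightarrow> 'a) \<Rightarrow> 'a set" where
  "Fix T = {x. T x = x}"

definition weakly_converges :: "(nat \<Rightarrow> 'a::real_inner) \<Rightarrow> 'a \<Rightarrow> bool" where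
  "weakly_converges x l \<longleftrightarrow> (\<forall>y. (\<lambda>n. inner (x n) y) \<longlonglongrightarrow> inner l y)"

end

theory Submission
  imports Defs "HOL-Library.Diagonal_Subsequence" "HOL-Library.Infinite_Set"
begin

lemma subspace_closure_rv:
  fixes V :: "'a::real_normed_vector set"
  assumes "subspace V" shows "subspace (closure V)"
  unfolding subspace_def
proof (intro conjI ballI allI)
  show "0 \<in> closure V" using assms closure_subset subspace_0 by blast
next
  fix x y assume "x \<in> closure V" "y \<in> closure V"
  then obtain f g where f: "\<And>n. f n \<in> V" "f \<longlonglongrightarrow> x" and g: "\<And>n. g n \<in> V" "g \<longlonglongrightarrow> y"
    by (meson closure_sequential)
  have "(\<lambda>n. f n + g n) \<longlonglongrightarrow> x + y" using f g by (intro tendsto_add)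
  moreover have "\<And>n. f n + g n \<in> V" using f g assms by (simp add: subspace_add)
  ultimately show "x + y \<in> closure V" by (meson closure_sequential)
next
  fix c :: real and x assume "x \<in> closure V"
  then obtain f where f: "\<And>n. f n \<in> V" "f \<longlonglongrightarrow> x"
    by (meson closure_sequential)
  have "(\<lambda>n. c *\<^sub>R f n) \<longlonglongrightarrow> c *\<^sub>R x" using f by (intro tendsto_scaleR tendsto_const)
  moreover have "\<And>n. c *\<^sub>R f n \<in> V" using f assms by (simp add: subspace_scale)
  ultimately show "c *\<^sub>R x \<in> closure V" by (meson closure_sequential)
qed

lemma quad_nonneg_zero:
  fixes a b :: real
  assumes "b \<ge> 0" "\<And>t. a * t + b * t^2 \<ge> 0"
  shows "a = 0"
proof -
  define u where "u = 2*b+1"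
  have u: "u > 0" using assms(1) unfolding u_def by simp
  define t where "t = - a / u"
  have tu: "t * u = -a" unfolding t_def using u by simp
  have "u^2 * (a*t + b*t^2) = a*u*(t*u) + b*(t*u)^2" by (simp add: power2_eq_square algebra_simps)
  also have "\<dots> = a*u*(-a) + b*(-a)^2" using tu by simp
  also have "\<dots> = -(a^2 * (b+1))" unfolding u_def by (simp add: power2_eq_square algebra_simps)
  finally have e: "u^2 * (a*t + b*t^2) = -(a^2 * (b+1))" .
  have "u^2 * (a*t + b*t^2) \<ge> 0" using assms(2)[of t] by simp
  then have "a^2 * (b+1) \<le> 0" using e by linarith
  moreover have "a^2 * (b+1) \<ge> 0" using assms(1) by simp
  ultimately have "a^2 * (b+1) = 0" by linarith
  then show ?thesis using assms(1) by simp
qed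

lemma riesz_sub:
  fixes V :: "'a::{real_inner,complete_space} set" and L :: "'a \<Rightarrow> real"
  assumes sub: "subspace V" and cl: "closed V"
    and add: "\<And>v w. v\<in>V \<Longrightarrow> w\<in>V \<Longrightarrow> L (v+w) = L v + L w"
    and scal: "\<And>c v. v\<in>V \<Longrightarrow> L (c *\<^sub>R v) = c * L v"
    and bnd0: "\<And>v. v\<in>V \<Longrightarrow> \<bar>L v\<bar> \<le> C * norm v"
  shows "\<exists>x\<in>V. \<forall>v\<in>V. L v = inner x v"
proof -
  define K where "K = \<bar>C\<bar>"
  have bnd: "\<bar>L v\<bar> \<le> K * norm v" if "v\<in>V" for v
    using bnd0[OF that] unfolding K_def by (smt (verit) mult_right_mono norm_ge_zero)
  have K0: "K \<ge> 0" unfolding K_def by simp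
  define \<Phi> where "\<Phi> v = (norm v)^2 / 2 - L v" for v
  have Lneg: "L (v - w) = L v - L w" if "v\<in>V" "w\<in>V" for v w
  proof -
    have mw: "-w \<in> V" using that sub by (simp add: subspace_neg)
    have "L (-w) = - L w" using that scal[of w "-1"] by simp
    moreover have "L (v + (-w)) = L v + L (-w)" using add[OF that(1) mw] .
    ultimately show ?thesis by simp
  qed
  have lb: "\<Phi> v \<ge> -(K^2)/2" if "v\<in>V" for v
  proof -
    have "(norm v - K)^2 \<ge> 0" by simp
    then have "(norm v)^2/2 - K * norm v \<ge> -(K^2)/2" by (simp add: power2_eq_square algebra_simps)
    with bnd[OF that] show ?thesis unfolding \<Phi>_def by linarith
  qed
  define m where "m = Inf (\<Phi> ` V)"
  have V0: "0 \<in> V" using sub subspace_0 by blast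
  have bdd: "bdd_below (\<Phi> ` V)" using lb by (meson bdd_belowI2)
  have mle: "m \<le> \<Phi> v" if "v \<in> V" for v unfolding m_def using bdd that by (simp add: cInf_lower)
  have "\<exists>v\<in>V. \<Phi> v < m + 1 / real (Suc k)" for k
  proof -
    have "Inf (\<Phi> ` V) < m + 1 / real (Suc k)" unfolding m_def by simp
    then show ?thesis using cInf_less_iff[of "\<Phi> ` V"] bdd V0 by auto
  qed
  then obtain f where f: "\<And>k. f k \<in> V" "\<And>k. \<Phi> (f k) < m + 1 / real (Suc k)" by metis
  have par: "(norm (v - w))^2 \<le> 4 * \<Phi> v + 4 * \<Phi> w - 8*m" if "v\<in>V" "w\<in>V" for v w
  proof -
    have mid: "(1/2) *\<^sub>R (v + w) \<in> V" using that sub by (simp add: subspace_add subspace_scale)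
    have vw: "v + w \<in> V" using that sub by (simp add: subspace_add)
    have "L ((1/2) *\<^sub>R (v + w)) = (L v + L w)/2" using scal[OF vw, of "1/2"] add[OF that] by simp
    moreover have "(norm ((1/2) *\<^sub>R (v + w)))^2 = (norm v)^2/2 + (norm w)^2/2 - (norm (v-w))^2/4"
      by (simp add: power2_norm_eq_inner inner_add_left inner_add_right inner_diff_left inner_diff_right inner_commute algebra_simps; simp add: field_simps)
    ultimately have "\<Phi> ((1/2) *\<^sub>R (v + w)) = \<Phi> v/2 + \<Phi> w/2 - (norm (v-w))^2/8"
      unfolding \<Phi>_def by (simp only:) (simp add: field_simps)
    with mle[OF mid] show ?thesis by linarith
  qed
  have "Cauchy f"
  proof (rule metric_CauchyI)
    fix e :: real assume "e > 0"
    obtain N where N: "1 / real (Suc N) < e^2 / 8" using \<open>e>0\<close>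
      by (metis divide_pos_pos nat_approx_posE zero_less_numeral zero_less_power)
    show "\<exists>M. \<forall>i\<ge>M. \<forall>j\<ge>M. dist (f i) (f j) < e"
    proof (intro exI allI impI)
      fix i j assume ij: "N \<le> i" "N \<le> j"
      have "1 / real (Suc i) \<le> 1 / real (Suc N)" "1 / real (Suc j) \<le> 1 / real (Suc N)"
        using ij by (simp_all add: frac_le)
      then have "(norm (f i - f j))^2 < e^2"
        using par[OF f(1) f(1), of i j] f(2)[of i] f(2)[of j] N
        by linarith
      then show "dist (f i) (f j) < e" using \<open>e>0\<close> by (simp add: dist_norm power_less_imp_less_base)
    qed
  qed
  then obtain x where x: "f \<longlonglongrightarrow> x" using Cauchy_convergent convergent_def by blast
  have xV: "x \<in> V" using closed_sequentially[OF cl f(1) x] .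
  have "(\<lambda>k. L (f k)) \<longlonglongrightarrow> L x"
  proof (rule tendsto_sandwich[where f="\<lambda>k. L x - K * norm (f k - x)" and h="\<lambda>k. L x + K * norm (f k - x)"])
    have "(\<lambda>k. norm (f k - x)) \<longlonglongrightarrow> 0" using x by (simp add: LIM_zero_iff tendsto_norm_zero)
    then have "(\<lambda>k. K * norm (f k - x)) \<longlonglongrightarrow> 0" by (simp add: tendsto_mult_right_zero)
    then show "(\<lambda>k. L x - K * norm (f k - x)) \<longlonglongrightarrow> L x" "(\<lambda>k. L x + K * norm (f k - x)) \<longlonglongrightarrow> L x"
      using tendsto_diff[OF tendsto_const, of "\<lambda>k. K * norm (f k - x)" 0 sequentially "L x"]
        tendsto_add[OF tendsto_const, of "\<lambda>k. K * norm (f k - x)" 0 sequentially "L x"] by auto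
    have bk: "\<bar>L (f k) - L x\<bar> \<le> K * norm (f k - x)" for k
      using bnd[of "f k - x"] Lneg[OF f(1) xV, of k] f(1)[of k] xV sub by (simp add: subspace_diff)
    show "\<forall>\<^sub>F n in sequentially. L x - K * norm (f n - x) \<le> L (f n)"
    proof (intro always_eventually allI)
      fix n show "L x - K * norm (f n - x) \<le> L (f n)" using bk[of n] by (simp add: abs_le_iff)
    qed
    show "\<forall>\<^sub>F n in sequentially. L (f n) \<le> L x + K * norm (f n - x)"
    proof (intro always_eventually allI)
      fix n show "L (f n) \<le> L x + K * norm (f n - x)" using bk[of n] by (simp add: abs_le_iff)
    qed
  qed
  then have "(\<lambda>k. \<Phi> (f k)) \<longlonglongrightarrow> \<Phi> x" unfolding \<Phi>_def
    by (intro tendsto_intros x) simp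
  moreover have "(\<lambda>k. m + 1 / real (Suc k)) \<longlonglongrightarrow> m"
    using tendsto_add[OF tendsto_const LIMSEQ_Suc[OF lim_inverse_n']] by simp
  ultimately have "\<Phi> x \<le> m" using f(2)
    by (meson LIMSEQ_le less_imp_le)
  then have xm: "\<Phi> x = m" using mle[OF xV] by simp
  show ?thesis
  proof (intro bexI[OF _ xV] ballI)
    fix v assume vV: "v \<in> V"
    have "(inner x v - L v) * t + ((norm v)^2/2) * t^2 \<ge> 0" for t
    proof -
      have "x + t *\<^sub>R v \<in> V" using xV vV sub by (simp add: subspace_add subspace_scale)
      then have "\<Phi> (x + t *\<^sub>R v) \<ge> \<Phi> x" using mle xm by simp
      moreover have "L (x + t *\<^sub>R v) = L x + t * L v" using add scal xV vV sub by (simp add: subspace_scale)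
      moreover have "(norm (x + t *\<^sub>R v))^2 = (norm x)^2 + 2 * t * inner x v + t^2 * (norm v)^2"
        by (simp add: power2_norm_eq_inner inner_add_left inner_add_right inner_commute algebra_simps) (simp add: power2_eq_square)
      ultimately show ?thesis unfolding \<Phi>_def by (simp add: algebra_simps)
    qed
    from quad_nonneg_zero[OF _ this] show "L v = inner x v" by simp
  qed
qed


lemma convergent_approx:
  fixes f :: "nat \<Rightarrow> real"
  assumes "\<And>e. e > 0 \<Longrightarrow> \<exists>g. convergent g \<and> (\<forall>i. \<bar>f i - g i\<bar> \<le> e)"
  shows "convergent f"
proof -
  have "Cauchy f"
  proof (rule metric_CauchyI)
    fix e :: real assume "e > 0"
    then obtain g where g: "convergent g" "\<And>i. \<bar>f i - g i\<bar> \<le> e/3" using assms[of "e/3"] by auto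
    then have "Cauchy g" using Cauchy_convergent_iff by blast
    then obtain M where M: "\<And>i j. i \<ge> M \<Longrightarrow> j \<ge> M \<Longrightarrow> dist (g i) (g j) < e/3"
      using \<open>e>0\<close> by (metis metric_CauchyD zero_less_divide_iff zero_less_numeral)
    show "\<exists>M. \<forall>i\<ge>M. \<forall>j\<ge>M. dist (f i) (f j) < e"
    proof (intro exI allI impI)
      fix i j assume "M \<le> i" "M \<le> j"
      then have "\<bar>g i - g j\<bar> < e/3" using M[of i j] by (simp add: dist_real_def)
      then show "dist (f i) (f j) < e" using g(2)[of i] g(2)[of j] unfolding dist_real_def by arith
    qed
  qed
  then show ?thesis using Cauchy_convergent_iff by blast
qed

lemma weak_compact:
  fixes x :: "nat \<Rightarrow> 'a::{real_inner,complete_space}"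
  assumes bd: "\<And>n. norm (x n) \<le> M"
  shows "\<exists>\<phi> l. strict_mono \<phi> \<and> weakly_converges (x \<circ> \<phi>) l"
proof -
  define P where "P = (\<lambda>k (s::nat\<Rightarrow>nat). convergent (\<lambda>i. inner (x (s i)) (x k)))"
  have M0: "M \<ge> 0" using order.trans[OF norm_ge_zero bd[of 0]] .
  have sub: "subseqs P" unfolding subseqs_def
  proof (intro allI impI)
    fix k and s :: "nat \<Rightarrow> nat" assume "strict_mono s"
    obtain r where r: "strict_mono r" "monoseq (\<lambda>n. inner (x (s (r n))) (x k))"
      using seq_monosub[of "\<lambda>i. inner (x (s i)) (x k)"] by auto
    have "Bseq (\<lambda>n. inner (x (s (r n))) (x k))"
    proof (rule BseqI')
      fix n
      have "\<bar>inner (x (s (r n))) (x k)\<bar> \<le> norm (x (s (r n))) * norm (x k)" by (rule Cauchy_Schwarz_ineq2)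
      also have "\<dots> \<le> M * M" using mult_mono[OF bd bd M0 norm_ge_zero] .
      finally show "norm (inner (x (s (r n))) (x k)) \<le> M * M" by simp
    qed
    then have "convergent (\<lambda>n. inner (x (s (r n))) (x k))" using r(2) Bseq_monoseq_convergent by blast
    then show "\<exists>r'. strict_mono r' \<and> P k (s \<circ> r')" using r(1) unfolding P_def by (auto simp: o_def)
  qed
  define d where "d = subseqs.diagseq P"
  have d_mono: "strict_mono d" unfolding d_def using subseqs.subseq_diagseq[OF sub] .
  define y where "y = x \<circ> d"
  have ybd: "norm (y i) \<le> M" for i unfolding y_def using bd by simp
  have conv_k: "convergent (\<lambda>i. inner (y i) (x k))" for k
  proof -
    have "P k (d \<circ> (+) (Suc k))" unfolding d_def
    proof (rule subseqs.diagseq_holds[OF sub])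
      fix r s n assume "strict_mono (r::nat\<Rightarrow>nat)" "P n s"
      then obtain l where "(\<lambda>i. inner (x (s i)) (x n)) \<longlonglongrightarrow> l" unfolding P_def convergent_def by auto
      then have "((\<lambda>i. inner (x (s i)) (x n)) \<circ> r) \<longlonglongrightarrow> l" using \<open>strict_mono r\<close> by (rule LIMSEQ_subseq_LIMSEQ)
      then show "P n (s \<circ> r)" unfolding P_def convergent_def by (auto simp: o_def)
    qed
    then obtain l where "(\<lambda>i. inner (x (d (Suc k + i))) (x k)) \<longlonglongrightarrow> l" unfolding P_def convergent_def by auto
    then have "(\<lambda>i. inner (y (i + Suc k)) (x k)) \<longlonglongrightarrow> l" unfolding y_def by (simp add: ac_simps)
    then have "(\<lambda>i. inner (y i) (x k)) \<longlonglongrightarrow> l" by (rule LIMSEQ_offset)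
    then show ?thesis unfolding convergent_def by auto
  qed
  define W where "W = span (range y)"
  define V where "V = closure W"
  have convW: "convergent (\<lambda>i. inner (y i) v)" if "v \<in> W" for v
    using that unfolding W_def
  proof (rule span_induct)
    show "subspace {v. convergent (\<lambda>i. inner (y i) v)}" unfolding subspace_def
    proof (intro conjI ballI allI; simp)
      show "convergent (\<lambda>i. 0::real)" by (simp add: convergent_const)
    next
      fix a b assume "convergent (\<lambda>i. inner (y i) a)" "convergent (\<lambda>i. inner (y i) b)"
      then show "convergent (\<lambda>i. inner (y i) (a + b))" by (simp add: inner_add_right convergent_add)
    next
      fix c :: real and a assume "convergent (\<lambda>i. inner (y i) a)"
      then show "convergent (\<lambda>i. c * inner (y i) a)" by (simp add: convergent_mult_const_iff convergent_const convergent_mult)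
    qed
    fix v assume "v \<in> range y"
    then obtain j where "v = y j" by auto
    then show "convergent (\<lambda>i. inner (y i) v)" using conv_k[of "d j"] unfolding y_def by simp
  qed
  have convV: "convergent (\<lambda>i. inner (y i) v)" if vV: "v \<in> V" for v
  proof (rule convergent_approx)
    fix e :: real assume "e > 0"
    have "e / (M+1) > 0" using \<open>e>0\<close> M0 by simp
    then obtain w where w: "w \<in> W" "dist w v < e / (M+1)" using vV unfolding V_def closure_approachable
      by blast
    show "\<exists>g. convergent g \<and> (\<forall>i. \<bar>inner (y i) v - g i\<bar> \<le> e)"
    proof (intro exI conjI allI)
      show "convergent (\<lambda>i. inner (y i) w)" using convW[OF w(1)] .
      fix i
      have "\<bar>inner (y i) v - inner (y i) w\<bar> = \<bar>inner (y i) (v - w)\<bar>" by (simp add: inner_diff_right)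
      also have "\<dots> \<le> norm (y i) * norm (v - w)" by (rule Cauchy_Schwarz_ineq2)
      also have "\<dots> \<le> (M+1) * (e / (M+1))"
        using ybd[of i] w(2) M0 by (intro mult_mono) (auto simp: dist_norm norm_minus_commute)
      also have "\<dots> = e" using M0 by simp
      finally show "\<bar>inner (y i) v - inner (y i) w\<bar> \<le> e" .
    qed
  qed
  have subW: "subspace W" unfolding W_def by simp
  have subV: "subspace V" unfolding V_def using subspace_closure_rv[OF subW] .
  have clV: "closed V" unfolding V_def by simp
  have yV: "y i \<in> V" for i
  proof -
    have "y i \<in> W" unfolding W_def by (simp add: span_base)
    then show ?thesis unfolding V_def using closure_subset by (rule subsetD[rotated])
  qed
  define L where "L v = lim (\<lambda>i. inner (y i) v)" for v
  have Llim: "(\<lambda>i. inner (y i) v) \<longlonglongrightarrow> L v" if "v \<in> V" for v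
    using convV[OF that] unfolding L_def convergent_LIMSEQ_iff .
  obtain xs where xs: "xs \<in> V" "\<And>v. v \<in> V \<Longrightarrow> L v = inner xs v"
  proof -
    have "\<exists>x\<in>V. \<forall>v\<in>V. L v = inner x v"
    proof (rule riesz_sub[OF subV clV, where C = M])
      fix v w assume "v \<in> V" "w \<in> V"
      then have "(\<lambda>i. inner (y i) (v + w)) \<longlonglongrightarrow> L v + L w"
        using tendsto_add[OF Llim Llim] by (simp add: inner_add_right)
      moreover have "v + w \<in> V" using \<open>v \<in> V\<close> \<open>w \<in> V\<close> subV by (simp add: subspace_add)
      ultimately show "L (v + w) = L v + L w" using Llim LIMSEQ_unique by blast
    next
      fix c v assume "v \<in> V"
      then have "(\<lambda>i. inner (y i) (c *\<^sub>R v)) \<longlonglongrightarrow> c * L v"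
        using tendsto_mult[OF tendsto_const Llim] by (simp add: inner_scaleR_right)
      moreover have "c *\<^sub>R v \<in> V" using \<open>v \<in> V\<close> subV by (simp add: subspace_scale)
      ultimately show "L (c *\<^sub>R v) = c * L v" using Llim LIMSEQ_unique by blast
    next
      fix v assume "v \<in> V"
      have "(\<lambda>i. \<bar>inner (y i) v\<bar>) \<longlonglongrightarrow> \<bar>L v\<bar>" using tendsto_rabs[OF Llim[OF \<open>v\<in>V\<close>]] .
      moreover have "\<bar>inner (y i) v\<bar> \<le> M * norm v" for i
        using Cauchy_Schwarz_ineq2[of "y i" v] ybd[of i] by (meson mult_right_mono norm_ge_zero order.trans)
      ultimately show "\<bar>L v\<bar> \<le> M * norm v" by (intro LIMSEQ_le_const2[of "\<lambda>i. \<bar>inner (y i) v\<bar>"]) auto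
    qed
    then show ?thesis using that by blast
  qed
  have "weakly_converges y xs" unfolding weakly_converges_def
  proof
    fix z
    obtain p where p: "p \<in> V" "\<And>v. v \<in> V \<Longrightarrow> inner z v = inner p v"
    proof -
      have "\<exists>p\<in>V. \<forall>v\<in>V. inner z v = inner p v"
      proof (rule riesz_sub[OF subV clV, where C = "norm z"])
        fix v w show "inner z (v + w) = inner z v + inner z w" by (rule inner_add_right)
      next
        fix c v show "inner z (c *\<^sub>R v) = c * inner z v" by (rule inner_scaleR_right)
      next
        fix v show "\<bar>inner z v\<bar> \<le> norm z * norm v" by (rule Cauchy_Schwarz_ineq2)
      qed
      then show ?thesis using that by blast
    qed
    have "(\<lambda>i. inner (y i) p) \<longlonglongrightarrow> L p" using Llim[OF p(1)] .
    moreover have "inner (y i) p = inner (y i) z" for i using p(2)[OF yV[of i]] by (simp add: inner_commute)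
    moreover have "L p = inner xs z" using xs(2)[OF p(1)] p(2)[OF xs(1)] by (simp add: inner_commute)
    ultimately show "(\<lambda>i. inner (y i) z) \<longlonglongrightarrow> inner xs z" by simp
  qed
  then show ?thesis using d_mono unfolding y_def by blast
qed

lemma weak_conv_cluster:
  fixes x :: "nat \<Rightarrow> 'a::{real_inner,complete_space}"
  assumes bd: "\<And>n. norm (x n) \<le> M"
    and H: "\<And>\<phi> l. strict_mono \<phi> \<Longrightarrow> weakly_converges (x \<circ> \<phi>) l \<Longrightarrow> l = p"
  shows "weakly_converges x p"
  unfolding weakly_converges_def
proof (rule allI, rule ccontr)
  fix y assume nc: "\<not> (\<lambda>n. inner (x n) y) \<longlonglongrightarrow> inner p y"
  then obtain e where e: "e > 0" "\<And>N. \<exists>n\<ge>N. e \<le> \<bar>inner (x n) y - inner p y\<bar>"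
    unfolding LIMSEQ_iff by (auto simp: not_less)
  define Sn where "Sn = {n. e \<le> \<bar>inner (x n) y - inner p y\<bar>}"
  have "infinite Sn"
    unfolding infinite_nat_iff_unbounded_le Sn_def using e(2) by auto
  from infinite_enumerate[OF this] obtain \<psi> :: "nat \<Rightarrow> nat" where \<psi>0: "strict_mono \<psi>" "\<forall>k. \<psi> k \<in> Sn"
    by (elim exE conjE)
  have \<psi>: "strict_mono \<psi>" "\<And>k. e \<le> \<bar>inner (x (\<psi> k)) y - inner p y\<bar>" using \<psi>0 unfolding Sn_def by auto
  have bdp: "norm ((x \<circ> \<psi>) n) \<le> M" for n using bd by simp
  obtain \<phi> l where \<phi>: "strict_mono \<phi>" "weakly_converges ((x \<circ> \<psi>) \<circ> \<phi>) l"
    using weak_compact[of "x \<circ> \<psi>" M, OF bdp] by blast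
  have sm: "strict_mono (\<psi> \<circ> \<phi>)" using \<psi>(1) \<phi>(1) by (rule strict_mono_o)
  have "weakly_converges (x \<circ> (\<psi> \<circ> \<phi>)) l" using \<phi>(2) by (simp add: o_assoc)
  then have "l = p" using H[OF sm] by blast
  then have "(\<lambda>k. inner (x (\<psi> (\<phi> k))) y) \<longlonglongrightarrow> inner p y"
    using \<phi>(2) unfolding weakly_converges_def by auto
  then obtain no where "\<And>n. n \<ge> no \<Longrightarrow> norm (inner (x (\<psi> (\<phi> n))) y - inner p y) < e"
    unfolding LIMSEQ_iff using e(1) by blast
  then have "\<bar>inner (x (\<psi> (\<phi> no))) y - inner p y\<bar> < e" by simp
  with \<psi>(2)[of "\<phi> no"] show False by simp
qed

lemma demiclosed:
  fixes z :: "nat \<Rightarrow> 'a::real_inner"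
  assumes ne: "nonexpansive T" and bd: "\<And>n. norm (z n) \<le> M" and wz: "weakly_converges z l"
    and reg: "(\<lambda>n. norm (z n - T (z n))) \<longlonglongrightarrow> 0"
  shows "T l = l"
proof -
  define w where "w = l - T l"
  define e where "e n = norm (z n - T (z n))" for n
  define B where "B = M + norm l"
  have dB: "norm (z n - l) \<le> B" for n unfolding B_def
    using norm_triangle_ineq4[of "z n" l] bd[of n] by linarith
  have key: "(norm w)^2 \<le> (e n)^2 + 2 * B * e n - 2 * (inner (z n) w - inner l w)" for n
  proof -
    have "norm (z n - T l) \<le> norm (z n - T (z n)) + norm (T (z n) - T l)"
      using norm_triangle_ineq[of "z n - T (z n)" "T (z n) - T l"] by simp
    also have "\<dots> \<le> e n + norm (z n - l)" using ne unfolding nonexpansive_def e_def by (simp add: add_left_mono)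
    finally have t1: "norm (z n - T l) \<le> e n + norm (z n - l)" .
    have e0: "e n \<ge> 0" unfolding e_def by simp
    have "(norm (z n - T l))^2 \<le> (e n + norm (z n - l))^2"
      using t1 by (simp add: power_mono)
    moreover have "(norm (z n - T l))^2 = (norm (z n - l))^2 + 2 * inner (z n - l) w + (norm w)^2"
    proof -
      have "z n - T l = (z n - l) + w" unfolding w_def by simp
      then show ?thesis by (simp only: power2_norm_eq_inner) (simp add: inner_add_left inner_add_right inner_commute)
    qed
    moreover have "inner (z n - l) w = inner (z n) w - inner l w" by (simp add: inner_diff_left)
    moreover have "(e n + norm (z n - l))^2 = (e n)^2 + 2 * e n * norm (z n - l) + (norm (z n - l))^2"
      by (simp add: power2_eq_square algebra_simps)
    moreover have "e n * norm (z n - l) \<le> e n * B" using dB[of n] e0 by (simp add: mult_left_mono)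
    ultimately show ?thesis by (simp add: algebra_simps)
  qed
  have el: "e \<longlonglongrightarrow> 0" using reg unfolding e_def .
  have il: "(\<lambda>n. inner (z n) w) \<longlonglongrightarrow> inner l w" using wz unfolding weakly_converges_def by simp
  have "(\<lambda>n. (e n)^2 + 2 * B * e n - 2 * (inner (z n) w - inner l w)) \<longlonglongrightarrow> 0^2 + 2 * B * 0 - 2 * (inner l w - inner l w)"
    by (intro tendsto_intros el il)
  then have gl: "(\<lambda>n. (e n)^2 + 2 * B * e n - 2 * (inner (z n) w - inner l w)) \<longlonglongrightarrow> 0" by simp
  have "(norm w)^2 \<le> 0" using LIMSEQ_le_const[OF gl] key by blast
  then have "w = 0" by simp
  then show ?thesis unfolding w_def by simp
qed

lemma opial_unique:
  fixes x :: "nat \<Rightarrow> 'a::real_inner"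
  assumes cv: "\<And>q. q \<in> F \<Longrightarrow> convergent (\<lambda>n. norm (x n - q))"
    and l: "l1 \<in> F" "l2 \<in> F"
    and s1: "strict_mono \<phi>1" "weakly_converges (x \<circ> \<phi>1) l1"
    and s2: "strict_mono \<phi>2" "weakly_converges (x \<circ> \<phi>2) l2"
  shows "l1 = l2"
proof -
  have eq0: "2 * inner (x n) (l1 - l2) = (norm (x n - l2))^2 - (norm (x n - l1))^2 - (norm l2)^2 + (norm l1)^2" for n
    by (simp only: power2_norm_eq_inner) (simp add: inner_diff_left inner_diff_right inner_commute algebra_simps)
  have eq: "inner (x n) (l1 - l2) = ((norm (x n - l2))^2 - (norm (x n - l1))^2 - (norm l2)^2 + (norm l1)^2)/2" for n
    using eq0[of n] by simp
  obtain c1 where c1: "(\<lambda>n. norm (x n - l1)) \<longlonglongrightarrow> c1" using cv[OF l(1)] convergent_def by blast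
  obtain c2 where c2: "(\<lambda>n. norm (x n - l2)) \<longlonglongrightarrow> c2" using cv[OF l(2)] convergent_def by blast
  define c where "c = (c2^2 - c1^2 - (norm l2)^2 + (norm l1)^2)/2"
  have "(\<lambda>n. ((norm (x n - l2))^2 - (norm (x n - l1))^2 - (norm l2)^2 + (norm l1)^2)/2) \<longlonglongrightarrow> c"
    unfolding c_def by (intro tendsto_intros c1 c2) simp
  then have cc: "(\<lambda>n. inner (x n) (l1 - l2)) \<longlonglongrightarrow> c" unfolding eq .
  have "(\<lambda>n. inner (x (\<phi>1 n)) (l1 - l2)) \<longlonglongrightarrow> c" using LIMSEQ_subseq_LIMSEQ[OF cc s1(1)] by (simp add: o_def)
  moreover have "(\<lambda>n. inner (x (\<phi>1 n)) (l1 - l2)) \<longlonglongrightarrow> inner l1 (l1 - l2)" using s1(2) unfolding weakly_converges_def by simp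
  ultimately have a1: "inner l1 (l1 - l2) = c" using LIMSEQ_unique by blast
  have "(\<lambda>n. inner (x (\<phi>2 n)) (l1 - l2)) \<longlonglongrightarrow> c" using LIMSEQ_subseq_LIMSEQ[OF cc s2(1)] by (simp add: o_def)
  moreover have "(\<lambda>n. inner (x (\<phi>2 n)) (l1 - l2)) \<longlonglongrightarrow> inner l2 (l1 - l2)" using s2(2) unfolding weakly_converges_def by simp
  ultimately have a2: "inner l2 (l1 - l2) = c" using LIMSEQ_unique by blast
  have "inner (l1 - l2) (l1 - l2) = 0" using a1 a2 by (simp add: inner_diff_left)
  then show ?thesis by simp
qed

lemma fejer_weak:
  fixes x :: "nat \<Rightarrow> 'a::{real_inner,complete_space}"
  assumes ne: "nonexpansive T" and it: "\<And>n. x (Suc n) = T (x n)" and F: "Fix T \<noteq> {}"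
    and reg: "(\<lambda>n. norm (x n - T (x n))) \<longlonglongrightarrow> 0"
  shows "\<exists>xs\<in>Fix T. weakly_converges x xs"
proof -
  have fej: "norm (x (Suc n) - z) \<le> norm (x n - z)" if "z \<in> Fix T" for z n
  proof -
    have "T z = z" using that unfolding Fix_def by simp
    moreover have "norm (T (x n) - T z) \<le> norm (x n - z)" using ne unfolding nonexpansive_def by blast
    ultimately show ?thesis using it[of n] by simp
  qed
  have fej2: "norm (x n - z) \<le> norm (x 0 - z)" if "z \<in> Fix T" for z n
  proof (induction n)
    case (Suc n) then show ?case using fej[OF that, of n] by linarith
  qed simp
  have cv: "convergent (\<lambda>n. norm (x n - q))" if "q \<in> Fix T" for q
  proof (rule Bseq_monoseq_convergent)
    show "Bseq (\<lambda>n. norm (x n - q))" using fej2[OF that] by (intro BseqI') simp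
    have "decseq (\<lambda>n. norm (x n - q))" using fej[OF that] by (intro decseq_SucI) simp
    then show "monoseq (\<lambda>n. norm (x n - q))" by (simp add: monoseq_iff)
  qed
  obtain z0 where z0: "z0 \<in> Fix T" using F by blast
  define M where "M = norm (x 0 - z0) + norm z0"
  have bd: "norm (x n) \<le> M" for n
    using fej2[OF z0, of n] norm_triangle_ineq2[of "x n" z0] unfolding M_def by linarith
  have clust: "l \<in> Fix T" if "strict_mono \<phi>" "weakly_converges (x \<circ> \<phi>) l" for \<phi> l
  proof -
    have "(\<lambda>n. norm ((x \<circ> \<phi>) n - T ((x \<circ> \<phi>) n))) \<longlonglongrightarrow> 0"
      using LIMSEQ_subseq_LIMSEQ[OF reg that(1)] by (simp add: o_def)
    then have "T l = l" using demiclosed[OF ne _ that(2), of M] bd by simp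
    then show ?thesis unfolding Fix_def by simp
  qed
  obtain \<phi> l where \<phi>: "strict_mono \<phi>" "weakly_converges (x \<circ> \<phi>) l" using weak_compact[of x M] bd by blast
  have lF: "l \<in> Fix T" using clust[OF \<phi>] .
  have "weakly_converges x l"
  proof (rule weak_conv_cluster[OF bd])
    fix \<psi> l' assume "strict_mono \<psi>" "weakly_converges (x \<circ> \<psi>) l'"
    then show "l' = l" using opial_unique[OF cv clust[OF \<open>strict_mono \<psi>\<close>] lF] \<phi> by blast
  qed
  then show ?thesis using lF by blast
qed

lemma core_id_b:
  fixes \<nu> \<sigma>1 \<sigma>2 \<sigma>3 lam \<delta> E D k t q ua ub aa ab bb ac bc cc :: real
  assumes "D = \<nu>*\<sigma>1 + \<sigma>2 - lam" "2*D*k = 2*\<nu>*\<sigma>1 - lam" "2*\<sigma>3*t = 1" "q = k*(2*\<sigma>2 - lam)"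
    "E = q + lam - \<delta>*t"
  shows "\<nu>*(ua - ub) - ((E/2)*(aa - 2*ab + bb)
     + \<delta>*\<sigma>3*(cc - 2*t*(ac-bc) + t^2*(aa - 2*ab + bb))
     + D*(bb + 2*k*(ab-bb) + k^2*(aa-2*ab+bb)))
     = \<nu>*(ua - \<sigma>1*aa) + (-\<nu>*ub + lam*ab - \<delta>*bc - \<sigma>2*bb) + \<delta>*(ac - \<sigma>3*cc)"
  using assms by algebra

lemma core_id_a:
  fixes \<nu> \<sigma>1 \<sigma>2 \<sigma>3 lam \<delta> E t ua ub aa ab bb ac bc cc :: real
  assumes "lam = 2*\<nu>*\<sigma>1" "lam = 2*\<sigma>2" "2*\<sigma>3*t = 1" "E = lam - \<delta>*t"
  shows "\<nu>*(ua - ub) - ((E/2)*(aa - 2*ab + bb)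
     + \<delta>*\<sigma>3*(cc - 2*t*(ac-bc) + t^2*(aa - 2*ab + bb)))
     = \<nu>*(ua - \<sigma>1*aa) + (-\<nu>*ub + lam*ab - \<delta>*bc - \<sigma>2*bb) + \<delta>*(ac - \<sigma>3*cc)"
  using assms by algebra

lemma key_ineq:
  fixes u a b c :: "'a::real_inner"
  assumes h1: "inner u a \<ge> \<sigma>1 * (norm a)^2"
    and h2: "inner (-\<nu> *\<^sub>R u + lam *\<^sub>R a - \<delta> *\<^sub>R c) b \<ge> \<sigma>2 * (norm b)^2"
    and h3: "inner a c \<ge> \<sigma>3 * (norm c)^2"
    and pos: "\<sigma>3 > 0" "\<nu> > 0" "\<delta> > 0"
    and cases: "(lam = 2 * \<nu> * \<sigma>1 \<and> lam = 2 * \<sigma>2 \<and>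
                  \<eta>s = (1 / \<nu>) * (lam - \<delta> / (2 * \<sigma>3)))
              \<or> (lam < \<nu> * \<sigma>1 + \<sigma>2 \<and>
                  \<eta>s = (1 / \<nu>) * ((2 * \<nu> * \<sigma>1 - lam) * (2 * \<sigma>2 - lam)
                          / (2 * (\<nu> * \<sigma>1 + \<sigma>2 - lam)) + lam - \<delta> / (2 * \<sigma>3)))"
  shows "\<nu> * inner u (a - b) \<ge> (\<nu>*\<eta>s/2) * (norm (a - b))^2
     + \<delta>*\<sigma>3 * (norm (c - (1/(2*\<sigma>3)) *\<^sub>R (a - b)))^2
     + (if lam < \<nu> * \<sigma>1 + \<sigma>2 then (\<nu>*\<sigma>1 + \<sigma>2 - lam) *
          (norm (b + ((2*\<nu>*\<sigma>1 - lam)/(2*(\<nu>*\<sigma>1 + \<sigma>2 - lam))) *\<^sub>R (a - b)))^2 else 0)"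
proof -
  define t where "t = 1/(2*\<sigma>3)"
  have t: "2*\<sigma>3*t = 1" unfolding t_def using pos by simp
  have F1: "inner u (a - b) = inner u a - inner u b" by (simp add: inner_diff_right)
  have F2: "(norm (a - b))^2 = inner a a - 2*inner a b + inner b b"
    by (simp add: power2_norm_eq_inner inner_diff_left inner_diff_right inner_commute)
  have F3: "(norm (c - t *\<^sub>R (a - b)))^2 = inner c c - 2*t*(inner a c - inner b c) + t^2*(inner a a - 2*inner a b + inner b b)"
    by (simp only: power2_norm_eq_inner) (simp add: inner_diff_left inner_diff_right inner_commute algebra_simps power2_eq_square)
  have F4: "(norm (b + k *\<^sub>R (a - b)))^2 = inner b b + 2*k*(inner a b - inner b b) + k^2*(inner a a - 2*inner a b + inner b b)" for k
    by (simp only: power2_norm_eq_inner) (simp add: inner_diff_left inner_diff_right inner_add_left inner_add_right inner_commute algebra_simps power2_eq_square)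
  have F5: "inner (-\<nu> *\<^sub>R u + lam *\<^sub>R a - \<delta> *\<^sub>R c) b = -\<nu> * inner u b + lam * inner a b - \<delta> * inner b c"
    by (simp add: inner_diff_left inner_add_left inner_diff_right inner_add_right inner_commute)
  have F6: "(norm a)^2 = inner a a" "(norm b)^2 = inner b b" "(norm c)^2 = inner c c"
    by (simp_all add: power2_norm_eq_inner)
  have s1: "\<nu>*(inner u a - \<sigma>1*inner a a) \<ge> 0" using h1 F6 pos by simp
  have s2: "-\<nu> * inner u b + lam * inner a b - \<delta> * inner b c - \<sigma>2 * inner b b \<ge> 0" using h2 F5 F6 by simp
  have s3: "\<delta>*(inner a c - \<sigma>3*inner c c) \<ge> 0" using h3 F6 pos by simp
  show ?thesis
  proof (cases "lam < \<nu> * \<sigma>1 + \<sigma>2")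
    case True
    define D where "D = \<nu>*\<sigma>1 + \<sigma>2 - lam"
    have Dp: "D > 0" using True unfolding D_def by simp
    define k where "k = (2*\<nu>*\<sigma>1 - lam)/(2*D)"
    have k: "2*D*k = 2*\<nu>*\<sigma>1 - lam" unfolding k_def using Dp by simp
    have E0: "\<nu>*\<eta>s = (2 * \<nu> * \<sigma>1 - lam) * (2 * \<sigma>2 - lam) / (2 * D) + lam - \<delta> / (2 * \<sigma>3)"
      using cases True pos unfolding D_def by auto
    have E: "\<nu>*\<eta>s = k*(2*\<sigma>2 - lam) + lam - \<delta>*t"
      unfolding E0 k_def t_def by simp
    have id: "\<nu>*(inner u a - inner u b) - ((\<nu>*\<eta>s/2)*(inner a a - 2*inner a b + inner b b)
     + \<delta>*\<sigma>3*(inner c c - 2*t*(inner a c - inner b c) + t^2*(inner a a - 2*inner a b + inner b b))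
     + D*(inner b b + 2*k*(inner a b - inner b b) + k^2*(inner a a - 2*inner a b + inner b b)))
     = \<nu>*(inner u a - \<sigma>1*inner a a) + (-\<nu>*inner u b + lam*inner a b - \<delta>*inner b c - \<sigma>2*inner b b) + \<delta>*(inner a c - \<sigma>3*inner c c)"
      by (rule core_id_b[OF D_def k t refl E])
    show ?thesis using True id s1 s2 s3 unfolding F1 F2 F3 F4 t_def[symmetric] D_def[symmetric] k_def[symmetric]
      by simp
  next
    case False
    then have ca: "lam = 2 * \<nu> * \<sigma>1" "lam = 2 * \<sigma>2" "\<nu>*\<eta>s = lam - \<delta>*t"
      using cases pos unfolding t_def by (auto simp: field_simps)
    have id: "\<nu>*(inner u a - inner u b) - ((\<nu>*\<eta>s/2)*(inner a a - 2*inner a b + inner b b)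
     + \<delta>*\<sigma>3*(inner c c - 2*t*(inner a c - inner b c) + t^2*(inner a a - 2*inner a b + inner b b)))
     = \<nu>*(inner u a - \<sigma>1*inner a a) + (-\<nu>*inner u b + lam*inner a b - \<delta>*inner b c - \<sigma>2*inner b b) + \<delta>*(inner a c - \<sigma>3*inner c c)"
      by (rule core_id_a[OF ca(1,2) t ca(3)])
    show ?thesis using False id s1 s2 s3 unfolding F1 F2 F3 t_def[symmetric]
      by simp
  qed
qed

lemma sq_tendsto_zero:
  fixes f :: "nat \<Rightarrow> real"
  assumes "\<And>n. f n \<ge> 0" "(\<lambda>n. (f n)^2) \<longlonglongrightarrow> 0"
  shows "f \<longlonglongrightarrow> 0"
proof -
  have "(\<lambda>n. sqrt ((f n)^2)) \<longlonglongrightarrow> sqrt 0" using tendsto_real_sqrt[OF assms(2)] .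
  then show ?thesis using assms(1) by simp
qed

lemma rate_lemma:
  fixes b :: "nat \<Rightarrow> real"
  assumes nn: "\<And>n. b n \<ge> 0" and dec: "\<And>n. b (Suc n) \<le> b n" and sm: "summable b"
  shows "(\<lambda>n. real n * b n) \<longlonglongrightarrow> 0"
  unfolding LIMSEQ_iff
proof (intro allI impI)
  fix e :: real assume "e > 0"
  then obtain N where N: "\<And>m n. m \<ge> N \<Longrightarrow> norm (sum b {m..<n}) < e/2"
    using sm unfolding summable_Cauchy by (meson half_gt_zero)
  show "\<exists>no. \<forall>n\<ge>no. norm (real n * b n - 0) < e"
  proof (intro exI allI impI)
    fix n assume n: "2*N \<le> n"
    define m where "m = n div 2"
    have mN: "m \<ge> N" using n unfolding m_def by simp
    have "real (card {m..<n}) * b n \<le> sum b {m..<n}"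
      by (rule sum_bounded_below) (use lift_Suc_antimono_le[of b, OF dec] in auto)
    also have "\<dots> < e/2" using N[OF mN, of n] nn by (simp add: sum_nonneg)
    finally have h: "real (n - m) * b n < e/2" by simp
    have "real n \<le> 2 * real (n - m)" unfolding m_def by linarith
    then have "real n * b n \<le> 2 * real (n - m) * b n" using nn[of n] by (simp add: mult_right_mono)
    then have "real n * b n < e" using h by linarith
    moreover have "real n * b n \<ge> 0" using nn[of n] by simp
    ultimately show "norm (real n * b n - 0) < e" by simp
  qed
qed

lemma sandwich0:
  fixes f g :: "nat \<Rightarrow> real"
  assumes "\<And>n. 0 \<le> f n" "\<And>n. c * f n \<le> g n" "c > 0" "g \<longlonglongrightarrow> 0"
  shows "f \<longlonglongrightarrow> 0"
proof (rule tendsto_sandwich[where f="\<lambda>n. 0" and h="\<lambda>n. g n / c"])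
  show "\<forall>\<^sub>F n in sequentially. 0 \<le> f n" using assms(1) by simp
  show "\<forall>\<^sub>F n in sequentially. f n \<le> g n / c" using assms(2,3)
    by (simp add: pos_le_divide_eq mult.commute)
  show "(\<lambda>n. 0) \<longlonglongrightarrow> (0::real)" by simp
  show "(\<lambda>n. g n / c) \<longlonglongrightarrow> 0" using tendsto_divide_zero[OF assms(4)] .
qed

lemma normsq_tendsto_zero:
  fixes f :: "nat \<Rightarrow> 'a::real_normed_vector"
  assumes "(\<lambda>n. (norm (f n))^2) \<longlonglongrightarrow> 0"
  shows "f \<longlonglongrightarrow> 0"
proof -
  have "(\<lambda>n. norm (f n)) \<longlonglongrightarrow> 0" by (rule sq_tendsto_zero) (use assms in auto)
  then show ?thesis using tendsto_norm_zero_iff by blast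
qed

lemma clust_id:
  fixes w e g r A B :: "'a::real_inner"
  shows "\<nu> * inner w (e + A) - (lam/2)*(norm (e + A))^2
     + (inner (-\<nu> *\<^sub>R w + lam *\<^sub>R e - \<delta> *\<^sub>R g) (e - r + B) - (lam/2)*(norm (e - r + B))^2)
   = -(lam/2)*((norm A)^2 + (norm B)^2) + (\<nu>*inner w A - lam*inner e A + \<nu>*inner w r - \<nu>*inner w B
       - \<delta>*inner g (e - r + B) - (lam/2)*(norm r)^2 + lam*inner r B)"
  by (simp only: power2_norm_eq_inner) (simp add: inner_add_left inner_add_right inner_diff_left inner_diff_right inner_commute algebra_simps)

lemma bounded_inner_zero:
  fixes f g :: "nat \<Rightarrow> 'a::real_inner"
  assumes "\<And>n. norm (f n) \<le> C" "g \<longlonglongrightarrow> 0"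
  shows "(\<lambda>n. inner (f n) (g n)) \<longlonglongrightarrow> 0"
proof -
  have C0: "C \<ge> 0" using assms(1)[of 0] norm_ge_zero order.trans by blast
  have "(\<lambda>n. norm (g n)) \<longlonglongrightarrow> 0" using assms(2) by (rule tendsto_norm_zero)
  then have h: "(\<lambda>n. C * norm (g n)) \<longlonglongrightarrow> 0" by (rule tendsto_mult_right_zero)
  have "(\<lambda>n. \<bar>inner (f n) (g n)\<bar>) \<longlonglongrightarrow> 0"
  proof (rule tendsto_sandwich[where f="\<lambda>n. 0" and h="\<lambda>n. C * norm (g n)"])
    show "\<forall>\<^sub>F n in sequentially. 0 \<le> \<bar>inner (f n) (g n)\<bar>" by simp
    show "\<forall>\<^sub>F n in sequentially. \<bar>inner (f n) (g n)\<bar> \<le> C * norm (g n)"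
    proof (intro always_eventually allI)
      fix n
      have "\<bar>inner (f n) (g n)\<bar> \<le> norm (f n) * norm (g n)" by (rule Cauchy_Schwarz_ineq2)
      also have "\<dots> \<le> C * norm (g n)" using assms(1)[of n] by (simp add: mult_right_mono)
      finally show "\<bar>inner (f n) (g n)\<bar> \<le> C * norm (g n)" .
    qed
  qed (use h in auto)
  then show ?thesis by (rule tendsto_rabs_zero_cancel)
qed

lemma desc_real:
  fixes A B I Q G \<eta> \<eta>s \<nu> :: real
  assumes "A = B - 2*\<eta>*I + \<eta>^2*Q" "\<eta>*I \<ge> \<eta>*((\<eta>s/2)*Q + G/\<nu>)" "\<nu> > 0"
  shows "A + \<eta>*(\<eta>s-\<eta>)*Q + (2*\<eta>/\<nu>)*G \<le> B"
proof -
  have e1: "\<eta>*((\<eta>s/2)*Q + G/\<nu>) = (\<eta>*\<eta>s*Q)/2 + (\<eta>*G)/\<nu>" by (simp add: algebra_simps add_divide_distrib)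
  have e2: "\<eta>*(\<eta>s-\<eta>)*Q = \<eta>*\<eta>s*Q - \<eta>^2*Q" by (simp add: algebra_simps power2_eq_square)
  have e3: "(2*\<eta>/\<nu>)*G = 2*((\<eta>*G)/\<nu>)" by simp
  show ?thesis using assms(1,2) unfolding e1 e2 e3 by linarith
qed

theorem theorem3p3:
  fixes T1 T2 T3 :: "'a::{real_inner, complete_space} \<Rightarrow> 'a"
    and \<sigma>1 \<sigma>2 \<sigma>3 \<eta> \<nu> lam \<delta> \<eta>s :: real
    and S T :: "'a \<Rightarrow> 'a"
    and x :: "nat \<Rightarrow> 'a"
  assumes coc1: "cocoercive \<sigma>1 T1" and coc2: "cocoercive \<sigma>2 T2" and coc3: "cocoercive \<sigma>3 T3"
    and pos: "\<eta> > 0" "\<nu> > 0" "lam > 0" "\<delta> > 0"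
    and S_def: "S = (\<lambda>z. - \<nu> *\<^sub>R z + lam *\<^sub>R T1 z - \<delta> *\<^sub>R T3 (T1 z))"
    and T_def: "T = (\<lambda>z. z - \<eta> *\<^sub>R T1 z + \<eta> *\<^sub>R T2 (S z))"
    and fix_ne: "Fix T \<noteq> {}"
    and cases: "(lam = 2 * \<nu> * \<sigma>1 \<and> lam = 2 * \<sigma>2 \<and>
                  \<eta>s = (1 / \<nu>) * (lam - \<delta> / (2 * \<sigma>3)))
              \<or> (lam < \<nu> * \<sigma>1 + \<sigma>2 \<and>
                  \<eta>s = (1 / \<nu>) * ((2 * \<nu> * \<sigma>1 - lam) * (2 * \<sigma>2 - lam)
                          / (2 * (\<nu> * \<sigma>1 + \<sigma>2 - lam)) + lam - \<delta> / (2 * \<sigma>3)))"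
    and eta_lt: "\<eta> < \<eta>s"
    and iter: "\<And>n. x (Suc n) = T (x n)"
  shows "averaged (\<eta> / \<eta>s) T \<and>
    (\<exists>xs \<in> Fix T.
       weakly_converges x xs \<and>
       (\<lambda>n. norm (x n - T (x n))) \<in> o(\<lambda>n. 1 / sqrt (real n)) \<and>
       ((\<lambda>n. T3 (T1 (x n))) \<longlonglongrightarrow> T3 (T1 xs)) \<and>
       (\<lambda>z. T3 (T1 z)) ` Fix T = {T3 (T1 xs)} \<and>
       (lam = 2 * \<nu> * \<sigma>1 \<and> lam = 2 * \<sigma>2 \<and> \<nu> = lam - 1 \<longrightarrow>
          weakly_converges (\<lambda>n. T1 (x n)) (T1 xs) \<and>
          weakly_converges (\<lambda>n. T2 (S (x n))) (T1 xs) \<and>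
          T1 xs = T2 (S xs)) \<and>
       (lam < \<nu> * \<sigma>1 + \<sigma>2 \<longrightarrow>
          ((\<lambda>n. T1 (x n)) \<longlonglongrightarrow> T1 xs) \<and>
          ((\<lambda>n. T2 (S (x n))) \<longlonglongrightarrow> T1 xs) \<and>
          T1 xs = T2 (S xs) \<and>
          T1 ` Fix T = {T1 xs} \<and> (\<lambda>z. T2 (S z)) ` Fix T = {T1 xs}))"
proof -
  have s1: "\<sigma>1 > 0" and c1: "\<And>u v. inner (u - v) (T1 u - T1 v) \<ge> \<sigma>1 * (norm (T1 u - T1 v))^2"
    using coc1 unfolding cocoercive_def by auto
  have s2: "\<sigma>2 > 0" and c2: "\<And>u v. inner (u - v) (T2 u - T2 v) \<ge> \<sigma>2 * (norm (T2 u - T2 v))^2"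
    using coc2 unfolding cocoercive_def by auto
  have s3: "\<sigma>3 > 0" and c3: "\<And>u v. inner (u - v) (T3 u - T3 v) \<ge> \<sigma>3 * (norm (T3 u - T3 v))^2"
    using coc3 unfolding cocoercive_def by auto
  have es: "\<eta>s > 0" using pos eta_lt by linarith
  define R where "R z = T1 z - T2 (S z)" for z
  have TR: "T z = z - \<eta> *\<^sub>R R z" for z unfolding T_def R_def by (simp add: algebra_simps)
  define t where "t = 1/(2*\<sigma>3)"
  define D where "D = \<nu>*\<sigma>1 + \<sigma>2 - lam"
  define k where "k = (2*\<nu>*\<sigma>1 - lam)/(2*D)"
  define Gc where "Gc u v = \<delta>*\<sigma>3 * (norm ((T3 (T1 u) - T3 (T1 v)) - t *\<^sub>R (R u - R v)))^2" for u v
  define Gd where "Gd u v = (if lam < \<nu> * \<sigma>1 + \<sigma>2 then D * (norm ((T2 (S u) - T2 (S v)) + k *\<^sub>R (R u - R v)))^2 else 0)" for u v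
  have Gc0: "Gc u v \<ge> 0" for u v unfolding Gc_def using pos s3 by simp
  have Gd0: "Gd u v \<ge> 0" for u v unfolding Gd_def D_def by simp
  have KEY: "\<nu> * inner (u - v) (R u - R v) \<ge> (\<nu>*\<eta>s/2) * (norm (R u - R v))^2 + Gc u v + Gd u v" for u v
  proof -
    have Sd: "S u - S v = -\<nu> *\<^sub>R (u - v) + lam *\<^sub>R (T1 u - T1 v) - \<delta> *\<^sub>R (T3 (T1 u) - T3 (T1 v))"
      unfolding S_def by (simp add: algebra_simps)
    have h2: "inner (-\<nu> *\<^sub>R (u - v) + lam *\<^sub>R (T1 u - T1 v) - \<delta> *\<^sub>R (T3 (T1 u) - T3 (T1 v))) (T2 (S u) - T2 (S v))
       \<ge> \<sigma>2 * (norm (T2 (S u) - T2 (S v)))^2" using c2[of "S u" "S v"] unfolding Sd .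
    have ab: "T1 u - T1 v - (T2 (S u) - T2 (S v)) = R u - R v" unfolding R_def by simp
    from key_ineq[OF c1[of u v] h2 c3[of "T1 u" "T1 v"] s3 pos(2) pos(4) cases]
    show ?thesis unfolding ab Gc_def Gd_def t_def D_def k_def by simp
  qed
  have K2: "inner (u - v) (R u - R v) \<ge> (\<eta>s/2) * (norm (R u - R v))^2 + (Gc u v + Gd u v) / \<nu>" for u v
  proof -
    have e: "\<nu> * ((\<eta>s/2) * (norm (R u - R v))^2 + (Gc u v + Gd u v) / \<nu>) = (\<nu>*\<eta>s/2) * (norm (R u - R v))^2 + Gc u v + Gd u v"
      using pos(2) by (simp add: field_simps)
    have "\<nu> * inner (u - v) (R u - R v) \<ge> \<nu> * ((\<eta>s/2) * (norm (R u - R v))^2 + (Gc u v + Gd u v) / \<nu>)"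
      using KEY[of u v] unfolding e by linarith
    then show ?thesis using pos(2) by (simp add: mult_le_cancel_left_pos)
  qed
  have Rcoc: "inner (u - v) (R u - R v) \<ge> (\<eta>s/2) * (norm (R u - R v))^2" for u v
    using K2[of u v] Gc0[of u v] Gd0[of u v] pos(2) by (smt (verit) divide_nonneg_pos)
  have nsq: "(norm (a - c *\<^sub>R b))^2 = (norm a)^2 - 2 * c * inner a b + c^2 * (norm b)^2" for a b :: 'a and c
    by (simp only: power2_norm_eq_inner) (simp add: inner_diff_left inner_diff_right inner_commute algebra_simps power2_eq_square)
  have DESC: "(norm (T u - T v))^2 + \<eta>*(\<eta>s-\<eta>) * (norm (R u - R v))^2 + (2*\<eta>/\<nu>) * (Gc u v + Gd u v) \<le> (norm (u - v))^2" for u v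
  proof -
    have "T u - T v = (u - v) - \<eta> *\<^sub>R (R u - R v)" unfolding TR by (simp add: algebra_simps)
    then have e: "(norm (T u - T v))^2 = (norm (u - v))^2 - 2 * \<eta> * inner (u - v) (R u - R v) + \<eta>^2 * (norm (R u - R v))^2"
      using nsq by simp
    have "\<eta> * inner (u - v) (R u - R v) \<ge> \<eta> * ((\<eta>s/2) * (norm (R u - R v))^2 + (Gc u v + Gd u v) / \<nu>)"
      using mult_left_mono[OF K2[of u v], of \<eta>] pos(1) by simp
    from desc_real[OF e this pos(2)] show ?thesis .
  qed
  have Tne: "nonexpansive T" unfolding nonexpansive_def
  proof (intro allI)
    fix u v
    have "\<eta>*(\<eta>s-\<eta>) * (norm (R u - R v))^2 \<ge> 0" using pos(1) eta_lt by simp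
    moreover have "(2*\<eta>/\<nu>) * (Gc u v + Gd u v) \<ge> 0" using pos Gc0[of u v] Gd0[of u v] by simp
    ultimately have "(norm (T u - T v))^2 \<le> (norm (u - v))^2" using DESC[of u v] by linarith
    then show "norm (T u - T v) \<le> norm (u - v)" by (simp add: power2_le_iff_abs_le)
  qed
  have avg: "averaged (\<eta> / \<eta>s) T" unfolding averaged_def
  proof (intro conjI exI)
    show "0 < \<eta> / \<eta>s" using pos(1) es by simp
    show "\<eta> / \<eta>s < 1" using eta_lt es by simp
    define N where "N z = z - \<eta>s *\<^sub>R R z" for z
    show "nonexpansive N" unfolding nonexpansive_def
    proof (intro allI)
      fix u v
      have "N u - N v = (u - v) - \<eta>s *\<^sub>R (R u - R v)" unfolding N_def by (simp add: algebra_simps)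
      then have e: "(norm (N u - N v))^2 = (norm (u - v))^2 - 2 * \<eta>s * inner (u - v) (R u - R v) + \<eta>s^2 * (norm (R u - R v))^2"
        using nsq by simp
      have "\<eta>s * inner (u - v) (R u - R v) \<ge> \<eta>s * ((\<eta>s/2) * (norm (R u - R v))^2 + 0/1)"
        using mult_left_mono[OF Rcoc[of u v], of \<eta>s] es by simp
      from desc_real[OF e this] have "(norm (N u - N v))^2 \<le> (norm (u - v))^2" by simp
      then show "norm (N u - N v) \<le> norm (u - v)" by (simp add: power2_le_iff_abs_le)
    qed
    show "\<forall>z. T z = (1 - \<eta> / \<eta>s) *\<^sub>R z + (\<eta> / \<eta>s) *\<^sub>R N z"
    proof
      fix z
      have "(1 - \<eta> / \<eta>s) *\<^sub>R z + (\<eta> / \<eta>s) *\<^sub>R N z = z - ((\<eta> / \<eta>s) * \<eta>s) *\<^sub>R R z"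
        unfolding N_def by (simp add: algebra_simps)
      also have "(\<eta> / \<eta>s) * \<eta>s = \<eta>" using es by simp
      finally show "T z = (1 - \<eta> / \<eta>s) *\<^sub>R z + (\<eta> / \<eta>s) *\<^sub>R N z" unfolding TR by simp
    qed
  qed
  have FixR: "z \<in> Fix T \<longleftrightarrow> R z = 0" for z
    unfolding Fix_def TR using pos(1) by simp
  define \<rho> where "\<rho> z n = \<eta>*(\<eta>s-\<eta>) * (norm (R (x n)))^2 + (2*\<eta>/\<nu>) * (Gc (x n) z + Gd (x n) z)" for z n
  have \<rho>0: "\<rho> z n \<ge> 0" for z n
  proof -
    have "\<eta>*(\<eta>s-\<eta>) * (norm (R (x n)))^2 \<ge> 0" using pos(1) eta_lt by simp
    moreover have "(2*\<eta>/\<nu>) * (Gc (x n) z + Gd (x n) z) \<ge> 0" using pos Gc0 Gd0 by simp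
    ultimately show ?thesis unfolding \<rho>_def by linarith
  qed
  have step: "(norm (x (Suc n) - z))^2 + \<rho> z n \<le> (norm (x n - z))^2" if "z \<in> Fix T" for z n
  proof -
    have "R z = 0" "T z = z" using that FixR unfolding Fix_def by auto
    then show ?thesis using DESC[of "x n" z] iter[of n] unfolding \<rho>_def by simp
  qed
  have tele: "(\<Sum>k<n. \<rho> z k) \<le> (norm (x 0 - z))^2 - (norm (x n - z))^2" if "z \<in> Fix T" for z n
  proof (induction n)
    case (Suc n) then show ?case using step[OF that, of n] by simp
  qed simp
  have \<rho>sum: "summable (\<rho> z)" if "z \<in> Fix T" for z
  proof (rule summableI_nonneg_bounded[where x = "(norm (x 0 - z))^2"])
    fix n show "0 \<le> \<rho> z n" using \<rho>0 .
    show "sum (\<rho> z) {..<n} \<le> (norm (x 0 - z))^2"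
      using tele[OF that, of n] zero_le_power2[of "norm (x n - z)"] by linarith
  qed
  have \<rho>lim: "\<rho> z \<longlonglongrightarrow> 0" if "z \<in> Fix T" for z using summable_LIMSEQ_zero[OF \<rho>sum[OF that]] .
  obtain z0 where z0: "z0 \<in> Fix T" using fix_ne by blast
  have c0: "\<eta>*(\<eta>s-\<eta>) > 0" using pos(1) eta_lt by simp
  have c2p: "2*\<eta>/\<nu> > 0" using pos by simp
  have \<rho>split: "\<rho> z n = \<eta>*(\<eta>s-\<eta>) * (norm (R (x n)))^2 + (2*\<eta>/\<nu>) * Gc (x n) z + (2*\<eta>/\<nu>) * Gd (x n) z" for z n
    unfolding \<rho>_def by (simp add: distrib_left)
  have GcT: "(2*\<eta>/\<nu>) * Gc u v \<ge> 0" for u v using mult_nonneg_nonneg[OF less_imp_le[OF c2p] Gc0[of u v]] .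
  have GdT: "(2*\<eta>/\<nu>) * Gd u v \<ge> 0" for u v using mult_nonneg_nonneg[OF less_imp_le[OF c2p] Gd0[of u v]] .
  have RT: "\<eta>*(\<eta>s-\<eta>) * (norm (R u))^2 \<ge> 0" for u using c0 by simp
  have Rsq_lim: "(\<lambda>n. (norm (R (x n)))^2) \<longlonglongrightarrow> 0"
  proof (rule sandwich0[OF _ _ c0 \<rho>lim[OF z0]])
    fix n show "0 \<le> (norm (R (x n)))^2" by simp
    show "\<eta>*(\<eta>s-\<eta>) * (norm (R (x n)))^2 \<le> \<rho> z0 n"
      unfolding \<rho>split using GcT[of "x n" z0] GdT[of "x n" z0] by linarith
  qed
  have Gc_lim: "(\<lambda>n. Gc (x n) z) \<longlonglongrightarrow> 0" if "z \<in> Fix T" for z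
  proof (rule sandwich0[OF Gc0 _ c2p \<rho>lim[OF that]])
    fix n show "(2*\<eta>/\<nu>) * Gc (x n) z \<le> \<rho> z n"
      unfolding \<rho>split using RT[of "x n"] GdT[of "x n" z] by linarith
  qed
  have Gd_lim: "(\<lambda>n. Gd (x n) z) \<longlonglongrightarrow> 0" if "z \<in> Fix T" for z
  proof (rule sandwich0[OF Gd0 _ c2p \<rho>lim[OF that]])
    fix n show "(2*\<eta>/\<nu>) * Gd (x n) z \<le> \<rho> z n"
      unfolding \<rho>split using RT[of "x n"] GcT[of "x n" z] by linarith
  qed
  have Rlim: "(\<lambda>n. R (x n)) \<longlonglongrightarrow> 0" using normsq_tendsto_zero[OF Rsq_lim] .
  have xTx: "x n - T (x n) = \<eta> *\<^sub>R R (x n)" for n unfolding TR by simp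
  have reg: "(\<lambda>n. norm (x n - T (x n))) \<longlonglongrightarrow> 0"
  proof -
    have "(\<lambda>n. \<eta> *\<^sub>R R (x n)) \<longlonglongrightarrow> \<eta> *\<^sub>R 0" by (intro tendsto_intros Rlim)
    then have "(\<lambda>n. x n - T (x n)) \<longlonglongrightarrow> 0" unfolding xTx by simp
    then show ?thesis by (rule tendsto_norm_zero)
  qed
  obtain xs where xs: "xs \<in> Fix T" "weakly_converges x xs" using fejer_weak[OF Tne iter fix_ne reg] by blast
  have Rxs: "R xs = 0" using xs(1) FixR by simp
  have T1xs: "T1 xs = T2 (S xs)" using Rxs unfolding R_def by simp
  define b where "b n = (norm (x n - T (x n)))^2" for n
  have b_nn: "b n \<ge> 0" for n unfolding b_def by simp
  have b_dec: "b (Suc n) \<le> b n" for n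
  proof -
    have "norm (x (Suc n) - T (x (Suc n))) = norm (T (x n) - T (x (Suc n)))" using iter[of n] by (simp add: norm_minus_commute)
    also have "\<dots> \<le> norm (x n - x (Suc n))" using Tne unfolding nonexpansive_def by blast
    also have "\<dots> = norm (x n - T (x n))" using iter[of n] by simp
    finally show ?thesis unfolding b_def by (simp add: power_mono)
  qed
  have b_sum: "summable b"
  proof (rule summable_comparison_test'[OF summable_mult[OF \<rho>sum[OF z0], of "\<eta>/(\<eta>s-\<eta>)"]])
    fix n :: nat
    have "b n = \<eta>^2 * (norm (R (x n)))^2" unfolding b_def xTx using pos(1) by (simp add: power_mult_distrib)
    also have "\<dots> = (\<eta>/(\<eta>s-\<eta>)) * (\<eta>*(\<eta>s-\<eta>) * (norm (R (x n)))^2)" using eta_lt by (simp add: field_simps power2_eq_square)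
    also have "\<dots> \<le> (\<eta>/(\<eta>s-\<eta>)) * \<rho> z0 n"
    proof (rule mult_left_mono)
      show "\<eta>*(\<eta>s-\<eta>) * (norm (R (x n)))^2 \<le> \<rho> z0 n"
        unfolding \<rho>split using GcT[of "x n" z0] GdT[of "x n" z0] by linarith
      show "0 \<le> \<eta>/(\<eta>s-\<eta>)" using pos(1) eta_lt by simp
    qed
    finally show "norm (b n) \<le> (\<eta>/(\<eta>s-\<eta>)) * \<rho> z0 n" using b_nn[of n] by simp
  qed
  have nb: "(\<lambda>n. real n * b n) \<longlonglongrightarrow> 0" using rate_lemma[OF b_nn b_dec b_sum] .
  have rate: "(\<lambda>n. norm (x n - T (x n))) \<in> o(\<lambda>n. 1 / sqrt (real n))"
  proof (rule smalloI_tendsto)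
    have "(\<lambda>n. sqrt (real n * b n)) \<longlonglongrightarrow> sqrt 0" using tendsto_real_sqrt[OF nb] .
    moreover have "sqrt (real n * b n) = norm (x n - T (x n)) / (1 / sqrt (real n))" for n
      unfolding b_def by (simp add: real_sqrt_mult mult.commute)
    ultimately show "((\<lambda>n. norm (x n - T (x n)) / (1 / sqrt (real n))) \<longlongrightarrow> 0) at_top" by simp
    show "\<forall>\<^sub>F n in at_top. 1 / sqrt (real n) \<noteq> 0"
      using eventually_gt_at_top[of "0::nat"] by (auto elim: eventually_mono)
  qed
  have t0: "\<delta>*\<sigma>3 > 0" using pos s3 by simp
  have c_lim: "(\<lambda>n. T3 (T1 (x n))) \<longlonglongrightarrow> T3 (T1 xs)"
  proof -
    have "(\<lambda>n. (norm ((T3 (T1 (x n)) - T3 (T1 xs)) - t *\<^sub>R (R (x n) - R xs)))^2) \<longlonglongrightarrow> 0"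
      by (rule sandwich0[OF _ _ t0 Gc_lim[OF xs(1)]]) (auto simp: Gc_def)
    then have "(\<lambda>n. (T3 (T1 (x n)) - T3 (T1 xs)) - t *\<^sub>R (R (x n) - R xs)) \<longlonglongrightarrow> 0"
      by (rule normsq_tendsto_zero)
    then have "(\<lambda>n. (T3 (T1 (x n)) - T3 (T1 xs)) - t *\<^sub>R R (x n)) \<longlonglongrightarrow> 0"
      using Rxs by simp
    moreover have "(\<lambda>n. t *\<^sub>R R (x n)) \<longlonglongrightarrow> t *\<^sub>R 0" by (intro tendsto_intros Rlim)
    ultimately have "(\<lambda>n. ((T3 (T1 (x n)) - T3 (T1 xs)) - t *\<^sub>R R (x n)) + t *\<^sub>R R (x n)) \<longlonglongrightarrow> 0 + t *\<^sub>R 0"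
      by (intro tendsto_add)
    then have "(\<lambda>n. T3 (T1 (x n)) - T3 (T1 xs)) \<longlonglongrightarrow> 0" by simp
    then show ?thesis by (rule LIM_zero_cancel)
  qed
  have Gzero: "Gc z xs = 0 \<and> Gd z xs = 0" if "z \<in> Fix T" for z
  proof -
    have "R z = 0" using that FixR by simp
    then have "0 \<ge> Gc z xs + Gd z xs" using KEY[of z xs] Rxs by simp
    then show ?thesis using Gc0[of z xs] Gd0[of z xs] by linarith
  qed
  have img3: "(\<lambda>z. T3 (T1 z)) ` Fix T = {T3 (T1 xs)}"
  proof -
    have "T3 (T1 z) = T3 (T1 xs)" if "z \<in> Fix T" for z
    proof -
      have "R z = 0" using that FixR by simp
      then show ?thesis using Gzero[OF that] Rxs pos(4) s3 unfolding Gc_def by auto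
    qed
    then have "(\<lambda>z. T3 (T1 z)) ` Fix T \<subseteq> {T3 (T1 xs)}" by blast
    moreover have "T3 (T1 xs) \<in> (\<lambda>z. T3 (T1 z)) ` Fix T" using xs(1) by blast
    ultimately show ?thesis by blast
  qed
  have partb: "lam < \<nu> * \<sigma>1 + \<sigma>2 \<longrightarrow>
          ((\<lambda>n. T1 (x n)) \<longlonglongrightarrow> T1 xs) \<and>
          ((\<lambda>n. T2 (S (x n))) \<longlonglongrightarrow> T1 xs) \<and>
          T1 xs = T2 (S xs) \<and>
          T1 ` Fix T = {T1 xs} \<and> (\<lambda>z. T2 (S z)) ` Fix T = {T1 xs}"
  proof
    assume cb: "lam < \<nu> * \<sigma>1 + \<sigma>2"
    have Dp: "D > 0" using cb unfolding D_def by simp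
    have "(\<lambda>n. (norm ((T2 (S (x n)) - T2 (S xs)) + k *\<^sub>R (R (x n) - R xs)))^2) \<longlonglongrightarrow> 0"
      by (rule sandwich0[OF _ _ Dp Gd_lim[OF xs(1)]]) (auto simp: Gd_def cb)
    then have "(\<lambda>n. (T2 (S (x n)) - T2 (S xs)) + k *\<^sub>R (R (x n) - R xs)) \<longlonglongrightarrow> 0"
      by (rule normsq_tendsto_zero)
    then have "(\<lambda>n. (T2 (S (x n)) - T2 (S xs)) + k *\<^sub>R R (x n)) \<longlonglongrightarrow> 0"
      using Rxs by simp
    moreover have "(\<lambda>n. k *\<^sub>R R (x n)) \<longlonglongrightarrow> k *\<^sub>R 0" by (intro tendsto_intros Rlim)
    ultimately have "(\<lambda>n. ((T2 (S (x n)) - T2 (S xs)) + k *\<^sub>R R (x n)) - k *\<^sub>R R (x n)) \<longlonglongrightarrow> 0 - k *\<^sub>R 0"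
      by (intro tendsto_diff)
    then have "(\<lambda>n. T2 (S (x n)) - T2 (S xs)) \<longlonglongrightarrow> 0" by simp
    then have "(\<lambda>n. T2 (S (x n))) \<longlonglongrightarrow> T2 (S xs)" by (rule LIM_zero_cancel)
    then have bl: "(\<lambda>n. T2 (S (x n))) \<longlonglongrightarrow> T1 xs" using T1xs by simp
    have "(\<lambda>n. T2 (S (x n)) + R (x n)) \<longlonglongrightarrow> T1 xs + 0" by (intro tendsto_add bl Rlim)
    then have al: "(\<lambda>n. T1 (x n)) \<longlonglongrightarrow> T1 xs" unfolding R_def by simp
    have eqz: "T2 (S z) = T1 xs \<and> T1 z = T1 xs" if "z \<in> Fix T" for z
    proof -
      have Rz: "R z = 0" using that FixR by simp
      then have "(norm (T2 (S z) - T2 (S xs)))^2 = 0" using Gzero[OF that] Rxs Dp cb unfolding Gd_def by simp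
      then have "T2 (S z) = T1 xs" using T1xs by simp
      moreover have "T1 z = T2 (S z)" using Rz unfolding R_def by simp
      ultimately show ?thesis by simp
    qed
    have "T1 ` Fix T \<subseteq> {T1 xs}" using eqz by blast
    moreover have "T1 xs \<in> T1 ` Fix T" using xs(1) by blast
    moreover have "(\<lambda>z. T2 (S z)) ` Fix T \<subseteq> {T1 xs}" using eqz by blast
    moreover have "T1 xs \<in> (\<lambda>z. T2 (S z)) ` Fix T" using xs(1) T1xs by (simp add: rev_image_eqI)
    ultimately have "T1 ` Fix T = {T1 xs}" "(\<lambda>z. T2 (S z)) ` Fix T = {T1 xs}" by blast+
    then show "((\<lambda>n. T1 (x n)) \<longlonglongrightarrow> T1 xs) \<and>
          ((\<lambda>n. T2 (S (x n))) \<longlonglongrightarrow> T1 xs) \<and>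
          T1 xs = T2 (S xs) \<and>
          T1 ` Fix T = {T1 xs} \<and> (\<lambda>z. T2 (S z)) ` Fix T = {T1 xs}"
      using al bl T1xs by simp
  qed
  have parta: "lam = 2 * \<nu> * \<sigma>1 \<and> lam = 2 * \<sigma>2 \<and> \<nu> = lam - 1 \<longrightarrow>
          weakly_converges (\<lambda>n. T1 (x n)) (T1 xs) \<and>
          weakly_converges (\<lambda>n. T2 (S (x n))) (T1 xs) \<and>
          T1 xs = T2 (S xs)"
  proof
    assume H: "lam = 2 * \<nu> * \<sigma>1 \<and> lam = 2 * \<sigma>2 \<and> \<nu> = lam - 1"
    have H1: "lam = 2 * \<nu> * \<sigma>1" using H by (rule conjunct1)
    have H2: "lam = 2 * \<sigma>2" using H by blast
    have ca1: "\<nu> * \<sigma>1 = lam/2" using H1 by simp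
    have ca2: "\<sigma>2 = lam/2" using H2 by simp
    have xdec: "norm (x (Suc n) - xs) \<le> norm (x n - xs)" for n
    proof -
      have "(norm (x (Suc n) - xs))^2 \<le> (norm (x n - xs))^2" using step[OF xs(1), of n] \<rho>0[of xs n] by linarith
      then show ?thesis by (simp add: power2_le_iff_abs_le)
    qed
    have xb0: "norm (x n - xs) \<le> norm (x 0 - xs)" for n
    proof (induction n)
      case (Suc n) then show ?case using xdec[of n] by linarith
    qed simp
    define Mw where "Mw = norm (x 0 - xs)"
    have T1lip: "\<sigma>1 * norm (T1 u - T1 v) \<le> norm (u - v)" for u v
    proof (cases "T1 u = T1 v")
      case True then show ?thesis by simp
    next
      case False
      have "\<sigma>1 * (norm (T1 u - T1 v))^2 \<le> norm (u - v) * norm (T1 u - T1 v)"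
        using c1[of u v] Cauchy_Schwarz_ineq2[of "u - v" "T1 u - T1 v"] by linarith
      then have "(\<sigma>1 * norm (T1 u - T1 v)) * norm (T1 u - T1 v) \<le> norm (u - v) * norm (T1 u - T1 v)"
        by (simp add: power2_eq_square mult.assoc)
      then show ?thesis using False by (simp add: mult_le_cancel_right)
    qed
    define Ma where "Ma = norm (T1 xs) + Mw / \<sigma>1"
    have ab: "norm (T1 (x n)) \<le> Ma" for n
    proof -
      have "\<sigma>1 * norm (T1 (x n) - T1 xs) \<le> Mw" using T1lip[of "x n" xs] xb0[of n] unfolding Mw_def by linarith
      then have "norm (T1 (x n) - T1 xs) \<le> Mw / \<sigma>1" using s1 by (simp add: pos_le_divide_eq mult.commute)
      then show ?thesis unfolding Ma_def using norm_triangle_ineq2[of "T1 (x n)" "T1 xs"] by linarith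
    qed
    define p where "p = T1 xs"
    define cs where "cs = T3 (T1 xs)"
    have wa: "weakly_converges (\<lambda>n. T1 (x n)) p"
    proof (rule weak_conv_cluster[OF ab])
      fix \<phi> :: "nat \<Rightarrow> nat" and a' assume \<phi>: "strict_mono \<phi>" "weakly_converges ((\<lambda>n. T1 (x n)) \<circ> \<phi>) a'"
      define s' where "s' = -\<nu> *\<^sub>R xs + lam *\<^sub>R a' - \<delta> *\<^sub>R cs"
      define q where "q = T2 s'"
      define A where "A = a' - p"
      define B where "B = a' - q"
      define w where "w k = x (\<phi> k) - xs" for k
      define e where "e k = T1 (x (\<phi> k)) - a'" for k
      define r where "r k = R (x (\<phi> k))" for k
      define g where "g k = T3 (T1 (x (\<phi> k))) - cs" for k
      have wb: "norm (w k) \<le> Mw" for k unfolding w_def Mw_def using xb0 by simp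
      have eb: "norm (e k) \<le> Ma + norm a'" for k unfolding e_def using ab[of "\<phi> k"] norm_triangle_ineq4[of "T1 (x (\<phi> k))" a'] by linarith
      have ebB: "norm (e k + B) \<le> Ma + norm a' + norm B" for k using eb[of k] norm_triangle_ineq[of "e k" B] by linarith
      have wlim: "(\<lambda>k. inner (w k) v) \<longlonglongrightarrow> 0" for v
      proof -
        have "(\<lambda>n. inner (x n) v) \<longlonglongrightarrow> inner xs v" using xs(2) unfolding weakly_converges_def by simp
        then have "(\<lambda>k. inner (x (\<phi> k)) v) \<longlonglongrightarrow> inner xs v" using LIMSEQ_subseq_LIMSEQ[OF _ \<phi>(1)] by (simp add: o_def)
        then have "(\<lambda>k. inner (x (\<phi> k)) v - inner xs v) \<longlonglongrightarrow> inner xs v - inner xs v" by (intro tendsto_diff tendsto_const)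
        then show ?thesis unfolding w_def by (simp add: inner_diff_left)
      qed
      have elim: "(\<lambda>k. inner (e k) v) \<longlonglongrightarrow> 0" for v
      proof -
        have "(\<lambda>k. inner (T1 (x (\<phi> k))) v) \<longlonglongrightarrow> inner a' v" using \<phi>(2) unfolding weakly_converges_def by (simp add: o_def)
        then have "(\<lambda>k. inner (T1 (x (\<phi> k))) v - inner a' v) \<longlonglongrightarrow> inner a' v - inner a' v" by (intro tendsto_diff tendsto_const)
        then show ?thesis unfolding e_def by (simp add: inner_diff_left)
      qed
      have rlim: "r \<longlonglongrightarrow> 0" unfolding r_def using LIMSEQ_subseq_LIMSEQ[OF Rlim \<phi>(1)] by (simp add: o_def)
      have glim: "g \<longlonglongrightarrow> 0"
      proof -
        have "(\<lambda>k. T3 (T1 (x (\<phi> k)))) \<longlonglongrightarrow> cs" unfolding cs_def using LIMSEQ_subseq_LIMSEQ[OF c_lim \<phi>(1)] by (simp add: o_def)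
        then show ?thesis unfolding g_def by (rule LIM_zero)
      qed
      define \<epsilon> where "\<epsilon> k = \<nu>*inner (w k) A - lam*inner (e k) A + \<nu>*inner (w k) (r k) - \<nu>*inner (w k) B
       - \<delta>*inner (g k) (e k - r k + B) - (lam/2)*(norm (r k))^2 + lam*inner (r k) B" for k
      define Kc where "Kc = -(lam/2)*((norm A)^2 + (norm B)^2)"
      have Qge: "Kc + \<epsilon> k \<ge> 0" for k
      proof -
        have I1: "inner (x (\<phi> k) - xs) (T1 (x (\<phi> k)) - p) \<ge> \<sigma>1 * (norm (T1 (x (\<phi> k)) - p))^2"
          unfolding p_def by (rule c1)
        have I2: "inner (S (x (\<phi> k)) - s') (T2 (S (x (\<phi> k))) - q) \<ge> \<sigma>2 * (norm (T2 (S (x (\<phi> k))) - q))^2"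
          unfolding q_def by (rule c2)
        have e1: "T1 (x (\<phi> k)) - p = e k + A" unfolding e_def A_def by simp
        have e2: "T2 (S (x (\<phi> k))) - q = e k - r k + B" unfolding e_def r_def B_def R_def by simp
        have e3: "S (x (\<phi> k)) - s' = -\<nu> *\<^sub>R w k + lam *\<^sub>R e k - \<delta> *\<^sub>R g k"
          unfolding S_def s'_def w_def e_def g_def by (simp add: algebra_simps)
        have "\<nu> * (inner (w k) (e k + A) - \<sigma>1 * (norm (e k + A))^2) \<ge> 0"
          using I1 pos(2) unfolding e1 w_def[symmetric] by simp
        moreover have "\<nu> * (inner (w k) (e k + A) - \<sigma>1 * (norm (e k + A))^2) = \<nu> * inner (w k) (e k + A) - (lam/2) * (norm (e k + A))^2"
          unfolding ca1[symmetric] by (simp add: algebra_simps)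
        ultimately have J1: "\<nu> * inner (w k) (e k + A) - (lam/2) * (norm (e k + A))^2 \<ge> 0"
          by linarith
        have J2: "inner (-\<nu> *\<^sub>R w k + lam *\<^sub>R e k - \<delta> *\<^sub>R g k) (e k - r k + B) - (lam/2)*(norm (e k - r k + B))^2 \<ge> 0"
          using I2 unfolding e2 e3 ca2 by simp
        have "Kc + \<epsilon> k = \<nu> * inner (w k) (e k + A) - (lam/2)*(norm (e k + A))^2
           + (inner (-\<nu> *\<^sub>R w k + lam *\<^sub>R e k - \<delta> *\<^sub>R g k) (e k - r k + B) - (lam/2)*(norm (e k - r k + B))^2)"
          unfolding Kc_def \<epsilon>_def by (rule clust_id[symmetric])
        then show ?thesis using J1 J2 by linarith
      qed
      have \<epsilon>lim: "\<epsilon> \<longlonglongrightarrow> 0"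
      proof -
        have l1: "(\<lambda>k. inner (w k) (r k)) \<longlonglongrightarrow> 0" using bounded_inner_zero[OF wb rlim] .
        have l2: "(\<lambda>k. inner (g k) (e k - r k + B)) \<longlonglongrightarrow> 0"
        proof -
          have "(\<lambda>k. inner (e k + B) (g k)) \<longlonglongrightarrow> 0" using bounded_inner_zero[OF ebB glim] .
          moreover have "(\<lambda>k. inner (g k) (r k)) \<longlonglongrightarrow> inner (0::'a) 0" by (intro tendsto_inner glim rlim)
          ultimately have "(\<lambda>k. inner (e k + B) (g k) - inner (g k) (r k)) \<longlonglongrightarrow> 0 - inner (0::'a) 0" by (intro tendsto_diff)
          moreover have "inner (g k) (e k - r k + B) = inner (e k + B) (g k) - inner (g k) (r k)" for k
            by (simp add: inner_add_left inner_add_right inner_diff_right inner_commute)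
          ultimately show ?thesis by simp
        qed
        have l3: "(\<lambda>k. (norm (r k))^2) \<longlonglongrightarrow> (norm (0::'a))^2" by (intro tendsto_intros rlim)
        have l4: "(\<lambda>k. inner (r k) B) \<longlonglongrightarrow> inner 0 B" by (intro tendsto_inner rlim tendsto_const)
        have "\<epsilon> \<longlonglongrightarrow> \<nu>*0 - lam*0 + \<nu>*0 - \<nu>*0 - \<delta>*0 - (lam/2)*(norm (0::'a))^2 + lam*inner 0 B"
          unfolding \<epsilon>_def by (intro tendsto_intros wlim elim l1 l2 l3 l4)
        then show ?thesis by simp
      qed
      have "(\<lambda>k. Kc + \<epsilon> k) \<longlonglongrightarrow> Kc + 0" by (intro tendsto_intros \<epsilon>lim)
      then have "0 \<le> Kc" using LIMSEQ_le_const[of "\<lambda>k. Kc + \<epsilon> k" "Kc + 0" 0] Qge by auto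
      then have "(norm A)^2 + (norm B)^2 \<le> 0" unfolding Kc_def using pos(3)
        by (simp add: mult_le_0_iff zero_le_mult_iff)
      then have "(norm A)^2 = 0" by (smt (verit) zero_le_power2)
      then show "a' = p" unfolding A_def by simp
    qed
    have wb2: "weakly_converges (\<lambda>n. T2 (S (x n))) p" unfolding weakly_converges_def
    proof
      fix y
      have "(\<lambda>n. inner (T1 (x n)) y) \<longlonglongrightarrow> inner p y" using wa unfolding weakly_converges_def by simp
      moreover have "(\<lambda>n. inner (R (x n)) y) \<longlonglongrightarrow> inner 0 y" by (intro tendsto_inner Rlim tendsto_const)
      ultimately have "(\<lambda>n. inner (T1 (x n)) y - inner (R (x n)) y) \<longlonglongrightarrow> inner p y - inner 0 y" by (intro tendsto_diff)
      then show "(\<lambda>n. inner (T2 (S (x n))) y) \<longlonglongrightarrow> inner p y" unfolding R_def by (simp add: inner_diff_left)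
    qed
    show "weakly_converges (\<lambda>n. T1 (x n)) (T1 xs) \<and> weakly_converges (\<lambda>n. T2 (S (x n))) (T1 xs) \<and> T1 xs = T2 (S xs)"
      using wa wb2 T1xs unfolding p_def by simp
  qed
  show ?thesis using avg xs rate c_lim img3 parta partb by blast
qed

end
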